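(* Let $\mathfrak{G}=(Y,R,E)$ be a descriptive $\mathsf{MS4}$-frame and $Q=E\circ R$. Then $\mathfrak{G}\vDash\mathsf{LKur}$ if and only if there is no morphism of descriptive $\mathsf{MS4}$-frames from a closed $Q$-upset of $\mathfrak{G}$ onto $\mathfrak{K}$, where $\mathfrak{K}=(\{a,b\},R,E)$ is the (discrete) frame with $R[a]=\{a,b\}$, $R[b]=\{b\}$, $E[a]=E[b]=\{a,b\}$.
   Context: $\mathsf{MS4}$ is the smallest set of formulas in the classical bimodal language $\mathcal{L}_{\Box\forall}$ containing all classical tautologies, the $\mathsf{S4}$ axioms for $\Box$, the $\mathsf{S5}$ axioms for $\forall$, and $\Box\forall p\to\forall\Box p$, closed under modus ponens, substitution, $\Box$- and $\forall$-necessitation; $\Diamond=\neg\Box\neg$. $\mathsf{LKur}=\mathsf{MS4}+\Box\forall\Diamond\Box p\to\Diamond\forall p$. A descriptive $\mathsf{MS4}$-frame is $(Y,R,E)$ with $Y$ a Stone space, $R$ a continuous quasi-order, $E$ a continuous equivalence relation (continuous: $R[x]=\{y:xRy\}$ closed for all $x$, $R^{-1}[U]$ clopen for clopen $U$), such that $xEy$, $yRz$ imply $\exists u$ with $xRu$, $uEz$. Valuations assign clopen sets; $\Box$ via $R$, $\forall$ via $E$. $x(E\circ R)y$ iff there is $z$ with $xRz$ and $zEy$. A $Q$-upset is $U$ with $x\in U$, $xQy\Rightarrow y\in U$; a closed $Q$-upset is regarded as a descriptive $\mathsf{MS4}$-frame with the subspace topology and restricted relations. A morphism of descriptive $\mathsf{MS4}$-frames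 $f:(Y_1,R_1,E_1)\to(Y_2,R_2,E_2)$ is a continuous map with $R_2[f(x)]=f[R_1[x]]$ and $E_2[f(x)]=f[E_1[x]]$ for all $x\in Y_1$. *)

theory Defs
  imports "HOL-Analysis.Analysis"
begin

definition clopenin :: "'a topology \<Rightarrow> 'a set \<Rightarrow> bool" where
  "clopenin X U \<longleftrightarrow> openin X U \<and> closedin X U"

definition stone_space :: "'a topology \<Rightarrow> bool" where
  "stone_space X \<longleftrightarrow> compact_space X \<and> Hausdorff_space X \<and>
     (\<forall>U. openin X U \<longrightarrow> U = \<Union>{V. clopenin X V \<and> V \<subseteq> U})"

definition continuous_rel :: "'a topology \<Rightarrow> 'a rel \<Rightarrow> bool" where
  "continuous_rel X S \<longleftrightarrow>
     (\<forall>x\<in>topspace X. closedin X (S `` {x})) \<and>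
     (\<forall>U. clopenin X U \<longrightarrow> clopenin X ((S\<inverse>) `` U))"

definition descriptive_MS4_frame :: "'a topology \<Rightarrow> 'a rel \<Rightarrow> 'a rel \<Rightarrow> bool" where
  "descriptive_MS4_frame X R E \<longleftrightarrow>
     stone_space X \<and>
     R \<subseteq> topspace X \<times> topspace X \<and> preorder_on (topspace X) R \<and>
     equiv (topspace X) E \<and>
     continuous_rel X R \<and> continuous_rel X E \<and>
     (\<forall>x y z. (x, y) \<in> E \<longrightarrow> (y, z) \<in> R \<longrightarrow> (\<exists>u. (x, u) \<in> R \<and> (u, z) \<in> E))"

datatype fm = Var nat | Bot | Imp fm fm | Box fm | All fm

definition Neg :: "fm \<Rightarrow> fm" where "Neg p = Imp p Bot"
definition Dia :: "fm \<Rightarrow> fm" where "Dia p = Neg (Box (Neg p))"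

fun peval :: "(fm \<Rightarrow> bool) \<Rightarrow> fm \<Rightarrow> bool" where
  "peval g (Var n) = g (Var n)"
| "peval g Bot = False"
| "peval g (Imp p q) = (peval g p \<longrightarrow> peval g q)"
| "peval g (Box p) = g (Box p)"
| "peval g (All p) = g (All p)"

definition tautology :: "fm \<Rightarrow> bool" where
  "tautology p \<longleftrightarrow> (\<forall>g. peval g p)"

fun subst :: "(nat \<Rightarrow> fm) \<Rightarrow> fm \<Rightarrow> fm" where
  "subst s (Var n) = s n"
| "subst s Bot = Bot"
| "subst s (Imp p q) = Imp (subst s p) (subst s q)"
| "subst s (Box p) = Box (subst s p)"
| "subst s (All p) = All (subst s p)"

abbreviation "pp \<equiv> Var 0"
abbreviation "qq \<equiv> Var 1"

definition MS4_axioms :: "fm set" where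
  "MS4_axioms = {
     Imp (Box (Imp pp qq)) (Imp (Box pp) (Box qq)),
     Imp (Box pp) pp,
     Imp (Box pp) (Box (Box pp)),
     Imp (All (Imp pp qq)) (Imp (All pp) (All qq)),
     Imp (All pp) pp,
     Imp (All pp) (All (All pp)),
     Imp (Neg (All pp)) (All (Neg (All pp))),
     Imp (Box (All pp)) (All (Box pp))}"

definition kur_axiom :: fm where
  "kur_axiom = Imp (Box (All (Dia (Box pp)))) (Dia (All pp))"

inductive_set logic :: "fm set \<Rightarrow> fm set" for A :: "fm set" where
  taut: "tautology p \<Longrightarrow> p \<in> logic A"
| ax: "p \<in> MS4_axioms \<Longrightarrow> p \<in> logic A"
| extra: "p \<in> A \<Longrightarrow> p \<in> logic A"
| mp: "p \<in> logic A \<Longrightarrow> Imp p q \<in> logic A \<Longrightarrow> q \<in> logic A"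
| sub: "p \<in> logic A \<Longrightarrow> subst s p \<in> logic A"
| nec_box: "p \<in> logic A \<Longrightarrow> Box p \<in> logic A"
| nec_all: "p \<in> logic A \<Longrightarrow> All p \<in> logic A"

definition MS4 :: "fm set" where "MS4 = logic {}"
definition LKur :: "fm set" where "LKur = logic {kur_axiom}"

fun sem :: "'a topology \<Rightarrow> 'a rel \<Rightarrow> 'a rel \<Rightarrow> (nat \<Rightarrow> 'a set) \<Rightarrow> fm \<Rightarrow> 'a set" where
  "sem X R E V (Var n) = V n"
| "sem X R E V Bot = {}"
| "sem X R E V (Imp p q) = (topspace X - sem X R E V p) \<union> sem X R E V q"
| "sem X R E V (Box p) = {x \<in> topspace X. R `` {x} \<subseteq> sem X R E V p}"
| "sem X R E V (All p) = {x \<in> topspace X. E `` {x} \<subseteq> sem X R E V p}"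

definition frame_valid :: "'a topology \<Rightarrow> 'a rel \<Rightarrow> 'a rel \<Rightarrow> fm \<Rightarrow> bool" where
  "frame_valid X R E p \<longleftrightarrow>
     (\<forall>V. (\<forall>n. clopenin X (V n)) \<longrightarrow> sem X R E V p = topspace X)"

definition frame_validates :: "'a topology \<Rightarrow> 'a rel \<Rightarrow> 'a rel \<Rightarrow> fm set \<Rightarrow> bool" where
  "frame_validates X R E L \<longleftrightarrow> (\<forall>p\<in>L. frame_valid X R E p)"

definition closed_upset :: "'a topology \<Rightarrow> 'a rel \<Rightarrow> 'a set \<Rightarrow> bool" where
  "closed_upset X Q U \<longleftrightarrow> closedin X U \<and>
     (\<forall>x y. x \<in> U \<longrightarrow> (x, y) \<in> Q \<longrightarrow> y \<in> U)"

definition frame_morphism_from ::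
  "'a topology \<Rightarrow> 'a rel \<Rightarrow> 'a rel \<Rightarrow> 'a set \<Rightarrow> 'b topology \<Rightarrow> 'b rel \<Rightarrow> 'b rel \<Rightarrow> ('a \<Rightarrow> 'b) \<Rightarrow> bool" where
  "frame_morphism_from X1 R1 E1 U X2 R2 E2 f \<longleftrightarrow>
     continuous_map (subtopology X1 U) X2 f \<and>
     (\<forall>x\<in>U. R2 `` {f x} = f ` (R1 `` {x} \<inter> U)) \<and>
     (\<forall>x\<in>U. E2 `` {f x} = f ` (E1 `` {x} \<inter> U))"

datatype kpt = Ka | Kb

definition K_top :: "kpt topology" where "K_top = discrete_topology UNIV"
definition K_R :: "kpt rel" where "K_R = {(Ka, Ka), (Ka, Kb), (Kb, Kb)}"
definition K_E :: "kpt rel" where "K_E = UNIV"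

end

theory Submission
  imports Defs
begin


lemma clopen_compl: "clopenin X T \<Longrightarrow> clopenin X (topspace X - T)"
  unfolding clopenin_def by auto

lemma separation:
  assumes st: "stone_space X" and cA: "closedin X A" and cB: "closedin X B" and d: "A \<inter> B = {}"
  shows "\<exists>C. clopenin X C \<and> A \<subseteq> C \<and> C \<inter> B = {}"
proof -
  have comp: "compactin X A" using st cA closedin_compact_space stone_space_def by blast
  let ?U = "{V. clopenin X V \<and> V \<inter> B = {}}"
  have cov: "A \<subseteq> \<Union>?U"
  proof
    fix a assume a: "a \<in> A"
    have o: "openin X (topspace X - B)" using cB by auto
    hence "topspace X - B = \<Union>{V. clopenin X V \<and> V \<subseteq> topspace X - B}"
      using st stone_space_def by blast
    moreover have "a \<in> topspace X - B" using a d cA closedin_subset by blast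
    ultimately obtain V where "clopenin X V" "V \<subseteq> topspace X - B" "a \<in> V" by blast
    thus "a \<in> \<Union>?U" by blast
  qed
  have "\<forall>V\<in>?U. openin X V" by (auto simp: clopenin_def)
  then obtain F where F: "finite F" "F \<subseteq> ?U" "A \<subseteq> \<Union>F"
    using comp cov unfolding compactin_def by meson
  have "clopenin X (\<Union>F)"
    unfolding clopenin_def
  proof
    show "openin X (\<Union>F)" using F by (auto simp: clopenin_def)
    show "closedin X (\<Union>F)" by (rule closedin_Union) (use F in \<open>auto simp: clopenin_def\<close>)
  qed
  thus ?thesis using F by blast
qed

lemma frame_facts:
  assumes "descriptive_MS4_frame X R E"
  shows "stone_space X" "R \<subseteq> topspace X \<times> topspace X" "E \<subseteq> topspace X \<times> topspace X"
    "\<And>x. x \<in> topspace X \<Longrightarrow> (x,x) \<in> R" "\<And>x. x \<in> topspace X \<Longrightarrow> (x,x) \<in> E"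
    "\<And>x y z. (x,y) \<in> R \<Longrightarrow> (y,z) \<in> R \<Longrightarrow> (x,z) \<in> R"
    "\<And>x y z. (x,y) \<in> E \<Longrightarrow> (y,z) \<in> E \<Longrightarrow> (x,z) \<in> E"
    "\<And>x y. (x,y) \<in> E \<Longrightarrow> (y,x) \<in> E"
    "\<And>U. clopenin X U \<Longrightarrow> clopenin X (R\<inverse> `` U)"
    "\<And>U. clopenin X U \<Longrightarrow> clopenin X (E\<inverse> `` U)"
    "\<And>x. x \<in> topspace X \<Longrightarrow> closedin X (E `` {x})"
    "\<And>x. x \<in> topspace X \<Longrightarrow> closedin X (R `` {x})"
    "\<And>x y z. (x, y) \<in> E \<Longrightarrow> (y, z) \<in> R \<Longrightarrow> (\<exists>u. (x, u) \<in> R \<and> (u, z) \<in> E)"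
  using assms unfolding descriptive_MS4_frame_def preorder_on_def equiv_def refl_on_def
    continuous_rel_def
  by (auto dest: transD symD)

lemma sem_sub: "(\<forall>n. V n \<subseteq> topspace X) \<Longrightarrow> sem X R E V p \<subseteq> topspace X"
  by (induction p) auto

lemma sem_Box_eq:
  assumes "descriptive_MS4_frame X R E"
  shows "sem X R E V (Box p) = topspace X - R\<inverse> `` (topspace X - sem X R E V p)"
  using frame_facts(2)[OF assms] by auto

lemma sem_All_eq:
  assumes "descriptive_MS4_frame X R E"
  shows "sem X R E V (All p) = topspace X - E\<inverse> `` (topspace X - sem X R E V p)"
  using frame_facts(3)[OF assms] by auto

lemma sem_clopen:
  assumes F: "descriptive_MS4_frame X R E" and V: "\<forall>n. clopenin X (V n)"
  shows "clopenin X (sem X R E V p)"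
proof (induction p)
  case (Var x) then show ?case using V by simp
next
  case Bot then show ?case by (simp add: clopenin_def)
next
  case (Imp p1 p2) then show ?case unfolding clopenin_def by auto
next
  case (Box p) then show ?case
    unfolding sem_Box_eq[OF F] by (intro clopen_compl frame_facts(9)[OF F] clopen_compl)
next
  case (All p) then show ?case
    unfolding sem_All_eq[OF F] by (intro clopen_compl frame_facts(10)[OF F] clopen_compl)
qed

lemma sem_peval: "x \<in> topspace X \<Longrightarrow> (x \<in> sem X R E V p) = peval (\<lambda>q. x \<in> sem X R E V q) p"
  by (induction p) auto

lemma sem_subst: "sem X R E V (subst s p) = sem X R E (\<lambda>n. sem X R E V (s n)) p"
  by (induction p) auto

lemma sem_Dia:
  assumes F: "descriptive_MS4_frame X R E"
  shows "sem X R E V (Dia q) = {x \<in> topspace X. \<exists>y. (x,y) \<in> R \<and> y \<in> sem X R E V q}"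
  using frame_facts(2)[OF F] unfolding Dia_def Neg_def by auto


context fixes X R E and V :: "nat \<Rightarrow> 'a set"
  assumes F: "descriptive_MS4_frame X R E" and Vs: "\<forall>n. V n \<subseteq> topspace X"
begin
lemma RE: "\<And>x y. (x,y) \<in> R \<Longrightarrow> y \<in> topspace X" "\<And>x y. (x,y) \<in> E \<Longrightarrow> y \<in> topspace X"
    using frame_facts(2,3)[OF F] by auto
lemma s1: "sem X R E V (Imp (Box (Imp pp qq)) (Imp (Box pp) (Box qq))) = topspace X"
    using Vs by auto
lemma s2: "sem X R E V (Imp (Box pp) pp) = topspace X" using Vs frame_facts(4)[OF F] by auto
lemma s3: "sem X R E V (Imp (Box pp) (Box (Box pp))) = topspace X"
    using Vs RE by (auto intro: frame_facts(6)[OF F])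
lemma s4: "sem X R E V (Imp (All (Imp pp qq)) (Imp (All pp) (All qq))) = topspace X"
    using Vs by auto
lemma s5: "sem X R E V (Imp (All pp) pp) = topspace X" using Vs frame_facts(5)[OF F] by auto
lemma s6: "sem X R E V (Imp (All pp) (All (All pp))) = topspace X"
    using Vs RE by (auto intro: frame_facts(7)[OF F])
lemma s7: "sem X R E V (Imp (Neg (All pp)) (All (Neg (All pp)))) = topspace X"
  proof -
    have "x \<in> sem X R E V (All (Neg (All pp)))" if x: "x \<in> topspace X" "x \<notin> sem X R E V (All pp)" for x
    proof -
      obtain z where z: "(x,z) \<in> E" "z \<notin> V 0" using x by auto
      have "y \<in> sem X R E V (Neg (All pp))" if "(x,y) \<in> E" for y
      proof -
        have "(y,z) \<in> E" using z that frame_facts(7,8)[OF F] by blast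
        thus ?thesis using z RE that unfolding Neg_def by auto
      qed
      thus ?thesis using x by auto
    qed
    moreover have "sem X R E V (Imp (Neg (All pp)) (All (Neg (All pp)))) \<subseteq> topspace X"
      by (rule sem_sub[OF Vs])
    ultimately show ?thesis unfolding Neg_def by auto
  qed
lemma s8: "sem X R E V (Imp (Box (All pp)) (All (Box pp))) = topspace X"
  proof -
    have "x \<in> sem X R E V (All (Box pp))" if x: "x \<in> topspace X" "x \<in> sem X R E V (Box (All pp))" for x
    proof -
      have "z \<in> V 0" if yz: "(x,y) \<in> E" "(y,z) \<in> R" for y z
      proof -
        obtain u where "(x,u) \<in> R" "(u,z) \<in> E" using frame_facts(13)[OF F, OF yz] by blast
        thus ?thesis using x by auto
      qed
      thus ?thesis using x RE by auto
    qed
    moreover have "sem X R E V (Imp (Box (All pp)) (All (Box pp))) \<subseteq> topspace X"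
      by (rule sem_sub[OF Vs])
    ultimately show ?thesis by auto
  qed
end


lemma axioms_valid:
  assumes F: "descriptive_MS4_frame X R E" and p: "p \<in> MS4_axioms"
  shows "frame_valid X R E p"
  unfolding frame_valid_def
proof (intro allI impI)
  fix V :: "nat \<Rightarrow> 'a set" assume V: "\<forall>n. clopenin X (V n)"
  have Vs: "\<forall>n. V n \<subseteq> topspace X" using V by (auto simp: clopenin_def dest: closedin_subset)
  note ss = s1[OF F Vs] s2[OF F Vs] s3[OF F Vs] s4[OF F Vs] s5[OF F Vs] s6[OF F Vs] s7[OF F Vs] s8[OF F Vs]
  from p show "sem X R E V p = topspace X"
    unfolding MS4_axioms_def
    apply (elim insertE emptyE)
    by (simp_all only: ss)
qed

lemma soundness:
  assumes F: "descriptive_MS4_frame X R E"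
  shows "p \<in> logic A \<Longrightarrow> (\<forall>q\<in>A. frame_valid X R E q) \<Longrightarrow> frame_valid X R E p"
proof (induction p rule: logic.induct)
  case (taut p)
  show ?case unfolding frame_valid_def
  proof (intro allI impI)
    fix V :: "nat \<Rightarrow> 'a set" assume V: "\<forall>n. clopenin X (V n)"
    have Vs: "\<forall>n. V n \<subseteq> topspace X" using V by (auto simp: clopenin_def dest: closedin_subset)
    have "x \<in> sem X R E V p" if "x \<in> topspace X" for x
      using sem_peval[OF that, of R E V p] taut(1) unfolding tautology_def by simp
    thus "sem X R E V p = topspace X" using sem_sub[OF Vs, of R E p] by blast
  qed
next
  case (ax p) then show ?case using axioms_valid F by blast
next
  case (extra p) then show ?case by blast
next
  case (mp p q)
  show ?case unfolding frame_valid_def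
  proof (intro allI impI)
    fix V :: "nat \<Rightarrow> 'a set" assume V: "\<forall>n. clopenin X (V n)"
    have "sem X R E V (Imp p q) = topspace X" "sem X R E V p = topspace X"
      using mp.IH mp.prems V unfolding frame_valid_def by auto
    thus "sem X R E V q = topspace X" by simp
  qed
next
  case (sub p s)
  show ?case unfolding frame_valid_def
  proof (intro allI impI)
    fix V :: "nat \<Rightarrow> 'a set" assume V: "\<forall>n. clopenin X (V n)"
    have "\<forall>n. clopenin X (sem X R E V (s n))" using sem_clopen[OF F V] by blast
    hence "sem X R E (\<lambda>n. sem X R E V (s n)) p = topspace X"
      using sub.IH[OF sub.prems] unfolding frame_valid_def by simp
    thus "sem X R E V (subst s p) = topspace X" unfolding sem_subst .
  qed
next
  case (nec_box p)
  show ?case unfolding frame_valid_def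
  proof (intro allI impI)
    fix V :: "nat \<Rightarrow> 'a set" assume V: "\<forall>n. clopenin X (V n)"
    have "sem X R E V p = topspace X" using nec_box.IH nec_box.prems V unfolding frame_valid_def by blast
    thus "sem X R E V (Box p) = topspace X" using frame_facts(2)[OF F] by auto
  qed
next
  case (nec_all p)
  show ?case unfolding frame_valid_def
  proof (intro allI impI)
    fix V :: "nat \<Rightarrow> 'a set" assume V: "\<forall>n. clopenin X (V n)"
    have "sem X R E V p = topspace X" using nec_all.IH nec_all.prems V unfolding frame_valid_def by blast
    thus "sem X R E V (All p) = topspace X" using frame_facts(3)[OF F] by auto
  qed
qed

lemma validates_iff:
  assumes F: "descriptive_MS4_frame X R E"
  shows "frame_validates X R E LKur \<longleftrightarrow> frame_valid X R E kur_axiom"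
proof
  assume "frame_validates X R E LKur"
  moreover have "kur_axiom \<in> LKur" unfolding LKur_def by (rule logic.extra) simp
  ultimately show "frame_valid X R E kur_axiom" unfolding frame_validates_def by blast
next
  assume k: "frame_valid X R E kur_axiom"
  show "frame_validates X R E LKur" unfolding frame_validates_def LKur_def
  proof
    fix p assume "p \<in> logic {kur_axiom}"
    thus "frame_valid X R E p" by (rule soundness[OF F]) (use k in simp)
  qed
qed



lemma dir1:
  assumes F: "descriptive_MS4_frame X R E" and U: "U \<subseteq> topspace X" "closed_upset X (R O E) U"
    and fm: "frame_morphism_from X R E U K_top K_R K_E f" and su: "f ` U = UNIV"
  shows "\<not> frame_valid X R E kur_axiom"
proof
  assume valid: "frame_valid X R E kur_axiom"
  note ff = frame_facts[OF F]
  have Ucl: "closedin X U" and Uup: "\<And>x y. x \<in> U \<Longrightarrow> (x,y) \<in> R O E \<Longrightarrow> y \<in> U"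
    using U(2) unfolding closed_upset_def by auto
  have UR: "y \<in> U" if xy: "x \<in> U" "(x,y) \<in> R" for x y
  proof -
    have "(y,y) \<in> E" using ff(2,5) that(2) by blast
    thus ?thesis using Uup[OF that(1)] that(2) by blast
  qed
  have UE: "y \<in> U" if xy: "x \<in> U" "(x,y) \<in> E" for x y
  proof -
    have "(x,x) \<in> R" using ff(4) U(1) that(1) by blast
    thus ?thesis using Uup[OF that(1)] that(2) by blast
  qed
  have cont: "continuous_map (subtopology X U) K_top f"
    and fR: "\<And>x. x\<in>U \<Longrightarrow> K_R `` {f x} = f ` (R `` {x} \<inter> U)"
    and fE: "\<And>x. x\<in>U \<Longrightarrow> K_E `` {f x} = f ` (E `` {x} \<inter> U)"
    using fm unfolding frame_morphism_from_def by auto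
  have tU: "topspace (subtopology X U) = U" using U(1) by auto
  have cl: "closedin X {x\<in>U. f x = k}" for k
  proof -
    have "closedin (subtopology X U) {x \<in> topspace (subtopology X U). f x \<in> {k}}"
      using cont unfolding continuous_map_closedin K_top_def closedin_discrete_topology by blast
    hence "closedin (subtopology X U) {x\<in>U. f x = k}" unfolding tU by simp
    thus ?thesis using closedin_closed_subtopology[OF Ucl] by blast
  qed
  obtain C where C: "clopenin X C" "{x\<in>U. f x = Kb} \<subseteq> C" "C \<inter> {x\<in>U. f x = Ka} = {}"
  proof -
    have "{x\<in>U. f x = Kb} \<inter> {x\<in>U. f x = Ka} = {}" by auto
    thus ?thesis using separation[OF ff(1) cl cl, of Kb Ka] that by blast
  qed
  define V where "V = (\<lambda>n::nat. C)"
  have V: "\<forall>n. clopenin X (V n)" using C V_def by simp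
  obtain x where x: "x \<in> U" "f x = Ka" using su by (metis UNIV_I imageE)
  have xt: "x \<in> topspace X" using x U(1) by blast
  have boxp: "\<exists>w. (z,w) \<in> R \<and> w \<in> sem X R E V (Box pp)" if z: "z \<in> U" for z
  proof -
    have "Kb \<in> K_R `` {f z}" unfolding K_R_def by (cases "f z") auto
    then obtain w where w: "(z,w) \<in> R" "w \<in> U" "f w = Kb" using fR[OF z] by auto
    have "t \<in> C" if "(w,t) \<in> R" for t
    proof -
      have "t \<in> U" using UR[OF w(2) that] .
      hence "f t \<in> K_R `` {Kb}" using fR[OF w(2)] w(3) that by auto
      hence "f t = Kb" unfolding K_R_def by auto
      thus ?thesis using C(2) \<open>t \<in> U\<close> by blast
    qed
    moreover have "w \<in> topspace X" using w(2) U(1) by blast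
    ultimately show ?thesis using w(1) unfolding V_def by auto
  qed
  have h1: "x \<in> sem X R E V (Box (All (Dia (Box pp))))"
  proof -
    have "z \<in> sem X R E V (Dia (Box pp))" if "(x,y) \<in> R" "(y,z) \<in> E" for y z
    proof -
      have "z \<in> U" using UE[OF UR[OF x(1) that(1)] that(2)] .
      thus ?thesis using boxp[OF \<open>z \<in> U\<close>] U(1) unfolding sem_Dia[OF F] by blast
    qed
    thus ?thesis using xt ff(2,3) by auto
  qed
  have h2: "x \<notin> sem X R E V (Dia (All pp))"
  proof
    assume "x \<in> sem X R E V (Dia (All pp))"
    then obtain y where y: "(x,y) \<in> R" "E `` {y} \<subseteq> C" unfolding sem_Dia[OF F] V_def by auto
    have yU: "y \<in> U" using UR[OF x(1) y(1)] .
    have "Ka \<in> K_E `` {f y}" unfolding K_E_def by simp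
    then obtain z where z: "(y,z) \<in> E" "z \<in> U" "f z = Ka" using fE[OF yU] by auto
    thus False using y(2) C(3) by blast
  qed
  have "x \<notin> sem X R E V kur_axiom" using h1 h2 unfolding kur_axiom_def by simp
  moreover have "sem X R E V kur_axiom = topspace X" using valid V unfolding frame_valid_def by blast
  ultimately show False using xt by blast
qed

lemma kpt_UNIV: assumes "Ka \<in> A" "Kb \<in> A" shows "A = UNIV"
proof -
  have "x \<in> A" for x using assms by (cases x) simp_all
  thus ?thesis by blast
qed

lemma E_image_closed:
  assumes F: "descriptive_MS4_frame X R E" and cF: "closedin X Fs"
  shows "closedin X (E `` Fs)"
proof -
  note ff = frame_facts[OF F]
  have sub: "E `` Fs \<subseteq> topspace X" using ff(3) by auto
  have "openin X (topspace X - E `` Fs)"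
    unfolding openin_subopen[of X "topspace X - E `` Fs"]
  proof
    fix y assume y: "y \<in> topspace X - E `` Fs"
    have cy: "closedin X (E `` {y})" using ff(11) y by blast
    have d: "Fs \<inter> E `` {y} = {}"
    proof (rule ccontr)
      assume "Fs \<inter> E `` {y} \<noteq> {}"
      then obtain c where "c \<in> Fs" "(y,c) \<in> E" by auto
      hence "(c,y) \<in> E" using ff(8) by blast
      thus False using y \<open>c \<in> Fs\<close> by blast
    qed
    obtain C where C: "clopenin X C" "Fs \<subseteq> C" "C \<inter> E `` {y} = {}"
      using separation[OF ff(1) cF cy d] by blast
    define T where "T = topspace X - E\<inverse> `` C"
    have oT: "openin X T" unfolding T_def using ff(10)[OF C(1)] by (auto simp: clopenin_def)
    have yT: "y \<in> T" unfolding T_def using y C(3) by auto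
    have "T \<subseteq> topspace X - E `` Fs"
    proof
      fix t assume t: "t \<in> T"
      show "t \<in> topspace X - E `` Fs"
      proof (rule ccontr)
        assume "t \<notin> topspace X - E `` Fs"
        then obtain c where c: "c \<in> Fs" "(c,t) \<in> E" using t unfolding T_def by auto
        hence "(t,c) \<in> E" using ff(8) by blast
        thus False using c C(2) t unfolding T_def by auto
      qed
    qed
    thus "\<exists>T. openin X T \<and> y \<in> T \<and> T \<subseteq> topspace X - E `` Fs" using oT yT by blast
  qed
  thus ?thesis using sub unfolding closedin_def by blast
qed

lemma dir2:
  assumes F: "descriptive_MS4_frame X R E" and nv: "\<not> frame_valid X R E kur_axiom"
  shows "\<exists>U f. U \<subseteq> topspace X \<and> closed_upset X (R O E) U \<and>
            frame_morphism_from X R E U K_top K_R K_E f \<and> f ` U = UNIV"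
proof -
  note ff = frame_facts[OF F]
  obtain V where V: "\<forall>n. clopenin X (V n)" "sem X R E V kur_axiom \<noteq> topspace X"
    using nv unfolding frame_valid_def by blast
  have Vs: "\<forall>n. V n \<subseteq> topspace X" using V(1) by (auto simp: clopenin_def dest: closedin_subset)
  obtain x0 where x0: "x0 \<in> topspace X" "x0 \<notin> sem X R E V kur_axiom"
    using V(2) sem_sub[OF Vs, of R E kur_axiom] by blast
  define P where "P = V 0"
  define S where "S = sem X R E V (Box pp)"
  have Seq: "S = {x \<in> topspace X. R `` {x} \<subseteq> P}" unfolding S_def P_def by simp
  have Sclo: "clopenin X S" unfolding S_def using sem_clopen[OF F V(1)] .
  have S1: "x0 \<in> sem X R E V (Box (All (Dia (Box pp))))"
   and S2: "x0 \<notin> sem X R E V (Dia (All pp))"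
    using x0 unfolding kur_axiom_def by auto
  have H1: "\<exists>w. (z,w) \<in> R \<and> w \<in> S" if "(x0,y) \<in> R" "(y,z) \<in> E" for y z
  proof -
    have "z \<in> sem X R E V (Dia (Box pp))" using S1 that by auto
    thus ?thesis unfolding sem_Dia[OF F] S_def by blast
  qed
  have H2: "\<exists>z. (y,z) \<in> E \<and> z \<notin> P" if "(x0,y) \<in> R" for y
  proof -
    have yt: "y \<in> topspace X" using ff(2) that by blast
    have "y \<notin> sem X R E V (All pp)" using S2 x0(1) that unfolding sem_Dia[OF F] by blast
    thus ?thesis using yt unfolding P_def by auto
  qed
  obtain w where w: "(x0,w) \<in> R" "w \<in> S" using H1[of x0 x0] ff(4,5) x0(1) by blast
  have wt: "w \<in> topspace X" using w(2) Seq by blast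
  have RwS: "v \<in> S" if "(w,v) \<in> R" for v
  proof -
    have "v \<in> topspace X" using ff(2) that by blast
    moreover have "R `` {v} \<subseteq> P" using w(2) that ff(6) unfolding Seq by blast
    ultimately show ?thesis unfolding Seq by blast
  qed
  define U where "U = (R O E) `` {w}"
  have Umem: "u \<in> U \<longleftrightarrow> (\<exists>v. (w,v) \<in> R \<and> (v,u) \<in> E)" for u unfolding U_def by blast
  have Usub: "U \<subseteq> topspace X" using ff(3) Umem by blast
  have UR: "y \<in> U" if xy: "x \<in> U" "(x,y) \<in> R" for x y
  proof -
    obtain v where v: "(w,v) \<in> R" "(v,x) \<in> E" using xy(1) Umem[of x] by blast
    obtain u where u: "(v,u) \<in> R" "(u,y) \<in> E" using ff(13)[OF v(2) xy(2)] by blast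
    show ?thesis using Umem[of y] ff(6)[OF v(1) u(1)] u(2) by blast
  qed
  have UE: "y \<in> U" if xy: "x \<in> U" "(x,y) \<in> E" for x y
  proof -
    obtain v where v: "(w,v) \<in> R" "(v,x) \<in> E" using xy(1) Umem[of x] by blast
    show ?thesis using Umem[of y] v(1) ff(7)[OF v(2) xy(2)] by blast
  qed
  have cu: "closed_upset X (R O E) U"
    unfolding closed_upset_def
  proof
    have "U = E `` (R `` {w})" unfolding U_def by (rule relcomp_Image)
    thus "closedin X U" using E_image_closed[OF F ff(12)[OF wt]] by simp
    show "\<forall>x y. x \<in> U \<longrightarrow> (x, y) \<in> R O E \<longrightarrow> y \<in> U" using UR UE by blast
  qed
  define f where "f = (\<lambda>x. if x \<in> S then Kb else Ka)"
  have cont: "continuous_map (subtopology X U) K_top f"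
    unfolding continuous_map_def
  proof (intro conjI allI impI)
    show "f \<in> topspace (subtopology X U) \<rightarrow> topspace K_top" unfolding K_top_def by simp
    fix Vs assume "openin K_top Vs"
    define T where "T = {x \<in> topspace X. f x \<in> Vs}"
    have Teq: "T = (if Kb \<in> Vs then S else {}) \<union> (if Ka \<in> Vs then topspace X - S else {})"
      unfolding T_def f_def using Sclo by (auto simp: clopenin_def dest: closedin_subset)
    have "openin X T" unfolding Teq using Sclo by (auto simp: clopenin_def)
    hence "openin (subtopology X U) (U \<inter> T)" by (rule openin_subtopology_Int2)
    moreover have "{x \<in> topspace (subtopology X U). f x \<in> Vs} = U \<inter> T"
      unfolding T_def by auto
    ultimately show "openin (subtopology X U) {x \<in> topspace (subtopology X U). f x \<in> Vs}" by simp
  qed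
  have fR: "K_R `` {f x} = f ` (R `` {x} \<inter> U)" if xU: "x \<in> U" for x
  proof (cases "x \<in> S")
    case True
    have xt: "x \<in> topspace X" using xU Usub by blast
    have "R `` {x} \<subseteq> S"
    proof
      fix t assume "t \<in> R `` {x}"
      hence t: "(x,t) \<in> R" by simp
      have "t \<in> topspace X" using ff(2) t by blast
      moreover have "R `` {t} \<subseteq> P" using True t ff(6) unfolding Seq by blast
      ultimately show "t \<in> S" unfolding Seq by blast
    qed
    moreover have "x \<in> R `` {x} \<inter> U" using ff(4) xt xU by blast
    ultimately have "f ` (R `` {x} \<inter> U) = {Kb}" unfolding f_def by auto
    moreover have "K_R `` {f x} = {Kb}" using True unfolding f_def K_R_def by auto
    ultimately show ?thesis by simp
  next
    case False
    have xt: "x \<in> topspace X" using xU Usub by blast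
    have "K_R `` {f x} = UNIV"
    proof (rule kpt_UNIV)
      show "Ka \<in> K_R `` {f x}" "Kb \<in> K_R `` {f x}" using False unfolding f_def K_R_def by auto
    qed
    moreover have "f ` (R `` {x} \<inter> U) = UNIV"
    proof (rule kpt_UNIV)
      have "x \<in> R `` {x} \<inter> U" using ff(4) xt xU by blast
      thus "Ka \<in> f ` (R `` {x} \<inter> U)" using False unfolding f_def by force
      obtain v where v: "(w,v) \<in> R" "(v,x) \<in> E" using xU Umem[of x] by blast
      obtain w' where w': "(x,w') \<in> R" "w' \<in> S" using H1[OF ff(6)[OF w(1) v(1)] v(2)] by blast
      have "w' \<in> U" using UR[OF xU w'(1)] .
      thus "Kb \<in> f ` (R `` {x} \<inter> U)" using w' unfolding f_def by force
    qed
    ultimately show ?thesis by simp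
  qed
  have fE: "K_E `` {f x} = f ` (E `` {x} \<inter> U)" if xU: "x \<in> U" for x
  proof -
    have "f ` (E `` {x} \<inter> U) = UNIV"
    proof (rule kpt_UNIV)
      obtain v where v: "(w,v) \<in> R" "(v,x) \<in> E" using xU Umem[of x] by blast
      have vt: "v \<in> topspace X" using ff(2) v(1) by blast
      have vU: "v \<in> U" unfolding Umem using v(1) ff(5)[OF vt] by blast
      have "(x,v) \<in> E" using ff(8) v(2) by blast
      thus "Kb \<in> f ` (E `` {x} \<inter> U)" using vU RwS[OF v(1)] unfolding f_def by force
      obtain z where z: "(v,z) \<in> E" "z \<notin> P" using H2[OF ff(6)[OF w(1) v(1)]] by blast
      have "(x,z) \<in> E" using ff(7,8) v(2) z(1) by blast
      moreover have "z \<in> U" unfolding Umem using v(1) z(1) by blast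
      moreover have "z \<notin> S"
      proof
        assume "z \<in> S"
        hence "z \<in> topspace X" "R `` {z} \<subseteq> P" unfolding Seq by auto
        thus False using ff(4) z(2) by blast
      qed
      ultimately show "Ka \<in> f ` (E `` {x} \<inter> U)" unfolding f_def by force
    qed
    thus ?thesis unfolding K_E_def by auto
  qed
  have surj: "f ` U = UNIV"
  proof (rule kpt_UNIV)
    have "w \<in> U" unfolding Umem using ff(4,5) wt by blast
    thus "Kb \<in> f ` U" using w(2) unfolding f_def by force
    obtain z where z: "(w,z) \<in> E" "z \<notin> P" using H2[OF w(1)] by blast
    have "z \<in> U" unfolding Umem using ff(4) wt z(1) by blast
    moreover have "z \<notin> S"
    proof
      assume "z \<in> S"
      hence "z \<in> topspace X" "R `` {z} \<subseteq> P" unfolding Seq by auto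
      thus False using ff(4) z(2) by blast
    qed
    ultimately show "Ka \<in> f ` U" unfolding f_def by force
  qed
  have "frame_morphism_from X R E U K_top K_R K_E f"
    unfolding frame_morphism_from_def using cont fR fE by blast
  thus ?thesis using Usub cu surj by blast
qed

theorem theorem4p19:
  fixes X :: "'a topology" and R E :: "'a rel"
  assumes "descriptive_MS4_frame X R E"
  shows "frame_validates X R E LKur \<longleftrightarrow>
    \<not> (\<exists>U f. U \<subseteq> topspace X \<and> closed_upset X (R O E) U \<and>
            frame_morphism_from X R E U K_top K_R K_E f \<and> f ` U = UNIV)"
proof
  assume "frame_validates X R E LKur"
  hence v: "frame_valid X R E kur_axiom" using validates_iff[OF assms] by blast
  show "\<not> (\<exists>U f. U \<subseteq> topspace X \<and> closed_upset X (R O E) U \<and>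
            frame_morphism_from X R E U K_top K_R K_E f \<and> f ` U = UNIV)"
  proof
    assume "\<exists>U f. U \<subseteq> topspace X \<and> closed_upset X (R O E) U \<and>
            frame_morphism_from X R E U K_top K_R K_E f \<and> f ` U = UNIV"
    then obtain U f where "U \<subseteq> topspace X" "closed_upset X (R O E) U"
            "frame_morphism_from X R E U K_top K_R K_E f" "f ` U = UNIV" by blast
    from dir1[OF assms this] v show False by blast
  qed
next
  assume n: "\<not> (\<exists>U f. U \<subseteq> topspace X \<and> closed_upset X (R O E) U \<and>
            frame_morphism_from X R E U K_top K_R K_E f \<and> f ` U = UNIV)"
  show "frame_validates X R E LKur"
  proof (rule ccontr)
    assume "\<not> frame_validates X R E LKur"
    hence "\<not> frame_valid X R E kur_axiom" using validates_iff[OF assms] by blast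
    from dir2[OF assms this] n show False by blast
  qed
qed

end
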